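(* Consider the dispersionless Kadomtsev–Petviashvili (dKP) equation written as the two-component first-order system $$u_t=uu_x+w_y,\qquad u_y=w_x$$ for $u(x,y,t)$, $w(x,y,t)$. Two-phase solutions of this system, i.e. solutions for which $(u,w)$ satisfy a pair of commuting two-component hydrodynamic-type systems $(u,w)^T_t=A(u,w)(u,w)^T_x$, $(u,w)^T_y=B(u,w)(u,w)^T_x$ (compatible with the dKP system) and are given implicitly by the generalised hodograph formula $x\,I+t\,A(u,w)+y\,B(u,w)=C(u,w)$, where $(u,w)^T_\tau=C(u,w)(u,w)^T_x$ is a further flow commuting with both, are given by the implicit formulae $$x+(z_u+u)t=m_u,\qquad y+z_w t=m_w,$$ where the functions $z(u,w)$ and $m(u,w)$ satisfy the PDEs $$z_{uu}+z_wz_{uw}-z_uz_{ww}+1=0,\qquad m_{uu}+z_wm_{uw}-z_um_{ww}=0 .$$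
   Context: Subscripts denote partial derivatives. $I$ is the $2\times 2$ identity matrix. Two-phase solutions are the solutions obtained from two-component hydrodynamic reductions, with the general solution of such a reduction given by Tsarev's generalised hodograph formula as described in the claim. *)

theory Defs
  imports "HOL-Analysis.Analysis"
begin

text \<open>State vector (u,w) is an element of real^2 (u = U$1, w = U$2); 2x2 matrices of
  functions of (u,w) are maps real^2 => real^2^2.  Points of space-time are triples (x,y,t).\<close>

definition C1_on :: "('a::euclidean_space \<Rightarrow> 'b::real_normed_vector) \<Rightarrow> 'a set \<Rightarrow> bool" where
  "C1_on f S \<longleftrightarrow> (\<exists>f'. (\<forall>p\<in>S. (f has_derivative f' p) (at p)) \<and>
                        (\<forall>v. continuous_on S (\<lambda>p. f' p v)))"

text \<open>Two hydrodynamic-type systems U_t = A(U) U_x and U_s = C(U) U_x commute: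
  U_ts = U_st identically, i.e. for every value p of U, every 1-jet v = U_x and every
  2-jet a = U_xx.\<close>
definition hydro_commute ::
  "(real^2 \<Rightarrow> real^2^2) \<Rightarrow> (real^2 \<Rightarrow> real^2^2) \<Rightarrow> (real^2) set \<Rightarrow> bool" where
  "hydro_commute A C D \<longleftrightarrow> (\<forall>p\<in>D. \<forall>v a.
     (frechet_derivative A (at p) (C p *v v)) *v v + A p *v ((frechet_derivative C (at p) v) *v v + C p *v a)
   = (frechet_derivative C (at p) (A p *v v)) *v v + C p *v ((frechet_derivative A (at p) v) *v v + A p *v a))"

text \<open>The pair U_t = A U_x, U_y = B U_x is compatible with the dKP system
  u_t = u u_x + w_y, u_y = w_x: the dKP equations hold for every 1-jet.\<close>
definition dKP_compatible :: "(real^2 \<Rightarrow> real^2^2) \<Rightarrow> (real^2 \<Rightarrow> real^2^2) \<Rightarrow> (real^2) set \<Rightarrow> bool" where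
  "dKP_compatible A B D \<longleftrightarrow> (\<forall>p\<in>D. \<forall>v.
     (A p *v v) $ 1 = p $ 1 * v $ 1 + (B p *v v) $ 2 \<and> (B p *v v) $ 1 = v $ 2)"

definition has_partials :: "(real^2 \<Rightarrow> real) \<Rightarrow> (real^2 \<Rightarrow> real) \<Rightarrow> (real^2 \<Rightarrow> real) \<Rightarrow> (real^2) set \<Rightarrow> bool" where
  "has_partials f fu fw S \<longleftrightarrow>
     (\<forall>p\<in>S. (f has_derivative (\<lambda>h. fu p * h $ 1 + fw p * h $ 2)) (at p))"

definition two_phase_solution ::
  "(real \<times> real \<times> real \<Rightarrow> real^2) \<Rightarrow> (real \<times> real \<times> real) set \<Rightarrow> (real^2) set \<Rightarrow>
   (real^2 \<Rightarrow> real^2^2) \<Rightarrow> (real^2 \<Rightarrow> real^2^2) \<Rightarrow> (real^2 \<Rightarrow> real^2^2) \<Rightarrow> bool" where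
  "two_phase_solution U \<Omega> D A B C \<longleftrightarrow>
     open \<Omega> \<and> open D \<and> U ` \<Omega> \<subseteq> D \<and>
     C1_on A D \<and> C1_on B D \<and> C1_on C D \<and>
     dKP_compatible A B D \<and>
     hydro_commute A B D \<and> hydro_commute A C D \<and> hydro_commute B C D \<and>
     (\<forall>q\<in>\<Omega>. \<exists>DU. (U has_derivative DU) (at q) \<and>
        DU (0,0,1) = A (U q) *v DU (1,0,0) \<and>
        DU (0,1,0) = B (U q) *v DU (1,0,0)) \<and>
     (\<forall>x y t. (x,y,t) \<in> \<Omega> \<longrightarrow>
        x *\<^sub>R mat 1 + t *\<^sub>R A (U (x,y,t)) + y *\<^sub>R B (U (x,y,t)) = C (U (x,y,t)))"

end

theory Submission
  imports Defs
begin


lemma poincare: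
  fixes F :: "'a::euclidean_space \<Rightarrow> 'a" and DF :: "'a \<Rightarrow> 'a \<Rightarrow> 'a"
  assumes S: "convex S" "open S" "q \<in> S"
    and dF: "\<forall>p\<in>S. (F has_derivative DF p) (at p)"
    and cDF: "\<forall>v. continuous_on S (\<lambda>p. DF p v)"
    and sym: "\<forall>p\<in>S. \<forall>h k. DF p h \<bullet> k = DF p k \<bullet> h"
  shows "\<exists>z. \<forall>p\<in>S. (z has_derivative (\<lambda>h. F p \<bullet> h)) (at p)"
proof -
  define \<gamma> where "\<gamma> p s = q + s *\<^sub>R (p - q)" for p s
  have \<gamma>S: "\<gamma> p s \<in> S" if "p \<in> S" "s \<in> cbox 0 (1::real)" for p s
  proof -
    have "\<gamma> p s = (1 - s) *\<^sub>R q + s *\<^sub>R p" by (simp add: \<gamma>_def algebra_simps)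
    thus ?thesis using S that convexD_alt[of S q p s] by auto
  qed
  have lin: "linear (DF p)" if "p \<in> S" for p using dF that has_derivative_linear by blast
  have contF: "continuous_on S F"
    using dF by (meson has_derivative_continuous continuous_at_imp_continuous_on)
  define fx where "fx p s = Blinfun (\<lambda>h. (s *\<^sub>R DF (\<gamma> p s) h) \<bullet> (p - q) + F (\<gamma> p s) \<bullet> h)" for p s
  have fx_apply: "blinfun_apply (fx p s) h = (s *\<^sub>R DF (\<gamma> p s) h) \<bullet> (p - q) + F (\<gamma> p s) \<bullet> h"
    if "p \<in> S" "s \<in> cbox 0 1" for p s h
  proof -
    have "linear (DF (\<gamma> p s))" using lin \<gamma>S that by blast
    have "linear (\<lambda>h. (s *\<^sub>R DF (\<gamma> p s) h) \<bullet> (p - q) + F (\<gamma> p s) \<bullet> h)"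
      by (rule linearI) (simp_all add: linear_add[OF \<open>linear (DF (\<gamma> p s))\<close>] linear_scale[OF \<open>linear (DF (\<gamma> p s))\<close>] inner_add_left inner_add_right algebra_simps)
    hence "bounded_linear (\<lambda>h. (s *\<^sub>R DF (\<gamma> p s) h) \<bullet> (p - q) + F (\<gamma> p s) \<bullet> h)"
      by (simp add: linear_conv_bounded_linear)
    thus ?thesis unfolding fx_def by (simp add: bounded_linear_Blinfun_apply)
  qed
  have cfx: "continuous_on (S \<times> cbox 0 1) (\<lambda>(x, t). fx x t)"
  proof (rule continuous_on_blinfun_componentwise)
    fix i :: 'a
    have g: "continuous_on (S \<times> cbox 0 1) (\<lambda>xt. \<gamma> (fst xt) (snd xt))"
      unfolding \<gamma>_def by (auto intro!: continuous_intros)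
    have gS: "(\<lambda>xt. \<gamma> (fst xt) (snd xt)) ` (S \<times> cbox 0 1) \<subseteq> S" using \<gamma>S by auto
    have "continuous_on (S \<times> cbox 0 1) (\<lambda>xt. (snd xt *\<^sub>R DF (\<gamma> (fst xt) (snd xt)) i) \<bullet> (fst xt - q) + F (\<gamma> (fst xt) (snd xt)) \<bullet> i)"
      by (intro continuous_intros continuous_on_compose2[OF cDF[rule_format] g gS]
          continuous_on_compose2[OF contF g gS])
    thus "continuous_on (S \<times> cbox 0 1) (\<lambda>x. blinfun_apply (case x of (x, t) \<Rightarrow> fx x t) i)"
      by (rule continuous_on_eq) (auto simp: fx_apply)
  qed
  define z where "z p = integral (cbox 0 (1::real)) (\<lambda>s. F (\<gamma> p s) \<bullet> (p - q))" for p
  show ?thesis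
  proof (intro exI ballI)
    fix p assume pS: "p \<in> S"
    have L: "(z has_derivative blinfun_apply (integral (cbox 0 1) (fx p))) (at p within S)"
      unfolding z_def
    proof (rule leibniz_rule[OF _ _ _ pS S(1)])
      fix x t assume xS: "x \<in> S" and t: "t \<in> cbox (0::real) 1"
      have d1: "((\<lambda>x. \<gamma> x t) has_derivative (\<lambda>h. t *\<^sub>R h)) (at x within S)"
        unfolding \<gamma>_def by (auto intro!: derivative_eq_intros simp: algebra_simps)
      have d2: "(F has_derivative DF (\<gamma> x t)) (at (\<gamma> x t) within (\<lambda>x. \<gamma> x t) ` S)"
        using dF \<gamma>S xS t has_derivative_at_withinI by blast
      have d3: "((\<lambda>x. F (\<gamma> x t)) has_derivative (\<lambda>h. DF (\<gamma> x t) (t *\<^sub>R h))) (at x within S)"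
        using has_derivative_in_compose[OF d1 d2] by (simp add: o_def)
      have d4: "((\<lambda>x. F (\<gamma> x t) \<bullet> (x - q)) has_derivative
          (\<lambda>h. F (\<gamma> x t) \<bullet> h + DF (\<gamma> x t) (t *\<^sub>R h) \<bullet> (x - q))) (at x within S)"
        by (rule has_derivative_inner[OF d3, THEN has_derivative_eq_rhs])
          (auto intro!: derivative_eq_intros)
      show "((\<lambda>x. F (\<gamma> x t) \<bullet> (x - q)) has_derivative blinfun_apply (fx x t)) (at x within S)"
        using d4 apply (rule has_derivative_eq_rhs)
        using lin[OF \<gamma>S[OF xS t]] by (auto simp: fx_apply[OF xS t] linear_scale)
    next
      fix x assume xS: "x \<in> S"
      have "continuous_on (cbox 0 1) (\<lambda>s. F (\<gamma> x s) \<bullet> (x - q))"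
        apply (intro continuous_intros continuous_on_compose2[OF contF])
        unfolding \<gamma>_def by (auto intro!: continuous_intros simp: \<gamma>S[OF xS, unfolded \<gamma>_def])
      thus "(\<lambda>s. F (\<gamma> x s) \<bullet> (x - q)) integrable_on cbox 0 1"
        using integrable_continuous by blast
    next
      show "continuous_on (S \<times> cbox 0 1) (\<lambda>(x, t). fx x t)" by (rule cfx)
    qed
    show "(z has_derivative (\<lambda>h. F p \<bullet> h)) (at p)"
    proof -
      have "blinfun_apply (integral (cbox 0 1) (fx p)) h = F p \<bullet> h" for h
      proof -
        define g where "g s = s * (F (\<gamma> p s) \<bullet> h)" for s
        define g' where "g' s = (s *\<^sub>R DF (\<gamma> p s) h) \<bullet> (p - q) + F (\<gamma> p s) \<bullet> h" for s
        have "(g' has_integral (g 1 - g 0)) {0..1}"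
        proof (rule fundamental_theorem_of_calculus)
          fix s :: real assume s: "s \<in> {0..1}"
          have sS: "\<gamma> p s \<in> S" using \<gamma>S pS s by auto
          have e1: "((\<lambda>s. \<gamma> p s) has_derivative (\<lambda>h. h *\<^sub>R (p - q))) (at s within {0..1})"
            unfolding \<gamma>_def by (auto intro!: derivative_eq_intros)
          have e2: "(F has_derivative DF (\<gamma> p s)) (at (\<gamma> p s) within (\<lambda>s. \<gamma> p s) ` {0..1})"
            using dF sS has_derivative_at_withinI by blast
          have e3: "((\<lambda>s. F (\<gamma> p s)) has_derivative (\<lambda>x. DF (\<gamma> p s) (x *\<^sub>R (p - q)))) (at s within {0..1})"
            using has_derivative_in_compose[OF e1 e2] by (simp add: o_def)
          have e4: "((\<lambda>s. F (\<gamma> p s) \<bullet> h) has_derivative (\<lambda>x. DF (\<gamma> p s) (x *\<^sub>R (p - q)) \<bullet> h)) (at s within {0..1})"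
            by (rule has_derivative_inner_left[OF e3])
          have e5: "(g has_derivative (\<lambda>x. s * (DF (\<gamma> p s) (x *\<^sub>R (p - q)) \<bullet> h) + x * (F (\<gamma> p s) \<bullet> h))) (at s within {0..1})"
            unfolding g_def by (rule has_derivative_mult[OF _ e4, THEN has_derivative_eq_rhs]) (auto intro!: derivative_eq_intros)
          have "(\<lambda>x. s * (DF (\<gamma> p s) (x *\<^sub>R (p - q)) \<bullet> h) + x * (F (\<gamma> p s) \<bullet> h)) = (\<lambda>x. x *\<^sub>R g' s)"
            using lin[OF sS] sym sS unfolding g'_def
            by (auto simp: linear_scale algebra_simps)
          thus "(g has_vector_derivative g' s) (at s within {0..1})"
            using e5 by (simp add: has_vector_derivative_def)
        qed simp
        hence "integral {0..1} g' = F p \<bullet> h" by (simp add: integral_unique g_def \<gamma>_def)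
        moreover have "fx p integrable_on cbox 0 1"
        proof (rule integrable_continuous)
          have "continuous_on (cbox 0 1) ((\<lambda>(x, t). fx x t) \<circ> (\<lambda>s. (p, s)))"
            by (rule continuous_on_compose[OF _ continuous_on_subset[OF cfx]]) (auto intro!: continuous_intros pS)
          thus "continuous_on (cbox 0 1) (fx p)" by (simp add: o_def)
        qed
        moreover have "integral (cbox 0 1) (\<lambda>y. blinfun_apply (fx p y) h) = integral {0..1} g'"
          unfolding box_real(2) by (rule integral_cong) (auto simp: fx_apply[OF pS] g'_def)
        ultimately show ?thesis
          by (simp add: blinfun_apply_integral)
      qed
      hence "(z has_derivative (\<lambda>h. F p \<bullet> h)) (at p within S)"
      proof -
        have "blinfun_apply (integral (cbox 0 1) (fx p)) = (\<lambda>h. F p \<bullet> h)"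
          using \<open>\<And>h. _ = F p \<bullet> h\<close> by (rule ext)
        thus ?thesis using L by simp
      qed
      thus ?thesis using at_within_open[OF pS S(2)] by simp
    qed
  qed
qed

abbreviation "e1 \<equiv> (axis 1 1 :: real^2)"
abbreviation "e2 \<equiv> (axis 2 1 :: real^2)"

lemma lin2:
  fixes L :: "real^2 \<Rightarrow> 'b::real_vector"
  assumes "linear L"
  shows "L h = h$1 *\<^sub>R L e1 + h$2 *\<^sub>R L e2"
proof -
  have "h = h$1 *\<^sub>R e1 + h$2 *\<^sub>R e2"
    by (simp add: vec_eq_iff forall_2 axis_def)
  hence "L h = L (h$1 *\<^sub>R e1 + h$2 *\<^sub>R e2)" by simp
  thus ?thesis using assms by (simp add: linear_add linear_scale)
qed

lemma mv2: "(M *v (v::real^2)) $ i = M$i$1 * v$1 + M$i$2 * v$2"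
  by (simp add: matrix_vector_mult_def sum_2)

lemma row_deriv:
  assumes "(M has_derivative M') F"
  shows "((\<lambda>p. M p $ i) has_derivative (\<lambda>h. M' h $ i)) F"
  using bounded_linear.has_derivative[OF bounded_linear_vec_nth assms] .

lemma entry_deriv[derivative_intros]:
  assumes "(M has_derivative M') F"
  shows "((\<lambda>p. M p $ i $ j) has_derivative (\<lambda>h. M' h $ i $ j)) F"
  using row_deriv[OF row_deriv[OF assms]] .

lemma local_deriv_eq:
  assumes "(f has_derivative f') (at p)" "(g has_derivative g') (at p)"
    "open D" "p \<in> D" "\<forall>x\<in>D. f x = g x"
  shows "f' = g'"
proof -
  have "(f has_derivative g') (at p)"
    using has_derivative_transform_within_open[OF assms(2) assms(3,4)] assms(5) by auto
  thus ?thesis using has_derivative_unique assms(1) by blast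
qed



lemma e_simps[simp]: "e1$1 = 1" "e1$2 = 0" "e2$1 = 0" "e2$2 = 1"
  by (simp_all add: axis_def)

lemma alg_AB:
  fixes A B :: "real^2^2" and A' B' :: "real^2 \<Rightarrow> real^2^2" and u b c :: real
  assumes lB: "linear B'"
    and B: "B$1$1 = 0" "B$1$2 = 1" "B$2$1 = b" "B$2$2 = c"
    and A: "A$1$1 = u + b" "A$1$2 = c" "A$2$1 = b*c" "A$2$2 = u + b + c*c"
    and dB: "\<And>h. B' h $1$1 = 0" "\<And>h. B' h $1$2 = 0"
    and dA: "\<And>h. A' h$1$1 = h$1 + B' h$2$1" "\<And>h. A' h$1$2 = B' h$2$2"
       "\<And>h. A' h$2$1 = B' h$2$1*c + b*B' h$2$2" "\<And>h. A' h$2$2 = h$1 + B' h$2$1 + 2*c*B' h$2$2"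
    and H: "A' (B *v e2) *v e2 + A *v (B' e2 *v e2) = B' (A *v e2) *v e2 + B *v (A' e2 *v e2)"
  shows "B' e2 $2$1 = B' e1 $2$2 \<and> B' e1$2$1 + c * B' e2$2$1 - b * B' e2$2$2 + 1 = 0"
proof -
  have l: "B' h $2$j = h$1 * B' e1 $2$j + h$2 * B' e2 $2$j" for h j
    using lin2[OF lB, of h] by simp
  from H have H1: "(A' (B *v e2) *v e2 + A *v (B' e2 *v e2))$1 = (B' (A *v e2) *v e2 + B *v (A' e2 *v e2))$1"
    and H2: "(A' (B *v e2) *v e2 + A *v (B' e2 *v e2))$2 = (B' (A *v e2) *v e2 + B *v (A' e2 *v e2))$2" by auto
  note simps = mv2 A B dA dB l[of "B *v e2"] l[of "A *v e2"]
  from H1 have E1: "B' e1 $ 2 $ 2 = B' e2 $ 2 $ 1" by (simp add: simps)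
  from H2 have E2: "1 + (B' e1 $ 2 $ 1 + (c * B' e2 $ 2 $ 1 + 2 * c * (B' e1 $ 2 $ 2 + c * B' e2 $ 2 $ 2))) =
     c * B' e1 $ 2 $ 2 + (b * B' e2 $ 2 $ 2 + c * (B' e2 $ 2 $ 1 + 2 * c * B' e2 $ 2 $ 2))" by (simp add: simps)
  show ?thesis using E1 E2 by (simp add: algebra_simps)
qed
lemma alg_BC:
  fixes C B :: "real^2^2" and C' B' :: "real^2 \<Rightarrow> real^2^2" and b c :: real
  assumes lB: "linear B'" and lC: "linear C'"
    and B: "B$1$1 = 0" "B$1$2 = 1" "B$2$1 = b" "B$2$2 = c"
    and C: "C$2$1 = b * C$1$2" "C$2$2 = C$1$1 + c * C$1$2"
    and dB: "\<And>h. B' h $1$1 = 0" "\<And>h. B' h $1$2 = 0"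
    and dC: "\<And>h. C' h$2$1 = B' h$2$1 * C$1$2 + b * C' h$1$2"
       "\<And>h. C' h$2$2 = C' h$1$1 + B' h$2$2 * C$1$2 + c * C' h$1$2"
    and H: "B' (C *v e2) *v e2 + B *v (C' e2 *v e2) = C' (B *v e2) *v e2 + C *v (B' e2 *v e2)"
  shows "C' e2$1$1 = C' e1 $1$2 \<and> C' e1$1$1 + c * C' e2$1$1 - b * C' e2 $1$2 = 0"
proof -
  have l: "B' h $2$j = h$1 * B' e1 $2$j + h$2 * B' e2 $2$j" for h j
    using lin2[OF lB, of h] by simp
  have m: "C' h $1$j = h$1 * C' e1 $1$j + h$2 * C' e2 $1$j" for h j
    using lin2[OF lC, of h] by simp
  from H have H1: "(B' (C *v e2) *v e2 + B *v (C' e2 *v e2))$1 = (C' (B *v e2) *v e2 + C *v (B' e2 *v e2))$1"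
    and H2: "(B' (C *v e2) *v e2 + B *v (C' e2 *v e2))$2 = (C' (B *v e2) *v e2 + C *v (B' e2 *v e2))$2" by auto
  note simps = mv2 C B dC dB l[of "C *v e2"] l[of "B *v e2"] m[of "B *v e2"]
  from H1 have E1: "C' e2 $ 1 $ 1 = C' e1 $ 1 $ 2" by (simp add: simps)
  from H2 have E2: "C $ 1 $ 2 * B' e1 $ 2 $ 2 +
     (b * C' e2 $ 1 $ 2 + c * (C' e2 $ 1 $ 1 + B' e2 $ 2 $ 2 * C $ 1 $ 2 + c * C' e2 $ 1 $ 2)) =
     C' e1 $ 1 $ 1 + (c * C' e2 $ 1 $ 1 + ((B' e1 $ 2 $ 2 + c * B' e2 $ 2 $ 2) * C $ 1 $ 2 +
       c * (C' e1 $ 1 $ 2 + c * C' e2 $ 1 $ 2)))" by (simp add: simps)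
  show ?thesis using E1 E2 by (simp add: algebra_simps)
qed


lemma nth_deriv: "((\<lambda>p. p $ i) has_derivative (\<lambda>h. h $ i)) F"
  using bounded_linear.has_derivative[OF bounded_linear_vec_nth has_derivative_ident] .

lemma lin2_entry:
  fixes L :: "real^2 \<Rightarrow> real^'n^'m"
  assumes "linear L"
  shows "(\<lambda>h. L h $i$j) = (\<lambda>h. L e1$i$j * h$1 + L e2$i$j * h$2)"
proof
  fix h show "L h $i$j = L e1$i$j * h$1 + L e2$i$j * h$2"
    using lin2[OF assms, of h] by (simp add: algebra_simps)
qed

lemma pointwise:
  fixes A B C :: "real^2 \<Rightarrow> real^2^2" and A' B' C' :: "real^2 \<Rightarrow> real^2 \<Rightarrow> real^2^2"
  assumes oD: "open D" and pD: "p \<in> D"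
    and dA: "\<forall>p\<in>D. (A has_derivative A' p) (at p)"
    and dB: "\<forall>p\<in>D. (B has_derivative B' p) (at p)"
    and dC: "\<forall>p\<in>D. (C has_derivative C' p) (at p)"
    and dkp: "dKP_compatible A B D" and hAB: "hydro_commute A B D" and hBC: "hydro_commute B C D"
  shows "B' p e2 $2$1 = B' p e1 $2$2 \<and>
         B' p e1$2$1 + B p$2$2 * B' p e2$2$1 - B p$2$1 * B' p e2$2$2 + 1 = 0 \<and>
         C' p e2$1$1 = C' p e1$1$2 \<and>
         C' p e1$1$1 + B p$2$2 * C' p e2$1$1 - B p$2$1 * C' p e2$1$2 = 0"
proof -
  have Bv: "B x $1$1 = 0 \<and> B x$1$2 = 1" if "x \<in> D" for x
    using dkp[unfolded dKP_compatible_def, rule_format, OF that, of e1]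
      dkp[unfolded dKP_compatible_def, rule_format, OF that, of e2] by (simp add: mv2)
  have Av: "A x$1$1 = x$1 + B x$2$1 \<and> A x$1$2 = B x$2$2" if "x \<in> D" for x
    using dkp[unfolded dKP_compatible_def, rule_format, OF that, of e1]
      dkp[unfolded dKP_compatible_def, rule_format, OF that, of e2] by (simp add: mv2)
  have commAB: "A x *v (B x *v a) = B x *v (A x *v a)" if "x \<in> D" for x a
    using hAB[unfolded hydro_commute_def, rule_format, OF that, of 0 a] by simp
  have commBC: "B x *v (C x *v a) = C x *v (B x *v a)" if "x \<in> D" for x a
    using hBC[unfolded hydro_commute_def, rule_format, OF that, of 0 a] by simp
  have Ae: "A x$2$1 = B x$2$1 * B x$2$2 \<and> A x$2$2 = x$1 + B x$2$1 + B x$2$2 * B x$2$2" if "x \<in> D" for x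
  proof -
    have "(A x *v (B x *v e1))$1 = (B x *v (A x *v e1))$1" "(A x *v (B x *v e2))$1 = (B x *v (A x *v e2))$1"
      using commAB[OF that] by auto
    thus ?thesis using Av[OF that] Bv[OF that] by (simp add: mv2 algebra_simps)
  qed
  have Ce: "C x$2$1 = B x$2$1 * C x$1$2 \<and> C x$2$2 = C x$1$1 + B x$2$2 * C x$1$2" if "x \<in> D" for x
  proof -
    have "(B x *v (C x *v e1))$1 = (C x *v (B x *v e1))$1" "(B x *v (C x *v e2))$1 = (C x *v (B x *v e2))$1"
      using commBC[OF that] by auto
    thus ?thesis using Bv[OF that] by (simp add: mv2 algebra_simps)
  qed
  have dAp: "(A has_derivative A' p) (at p)" using dA pD by blast
  have dBp: "(B has_derivative B' p) (at p)" using dB pD by blast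
  have dCp: "(C has_derivative C' p) (at p)" using dC pD by blast
  have lA: "linear (A' p)" using dAp has_derivative_linear by blast
  have lB: "linear (B' p)" using dBp has_derivative_linear by blast
  have lC: "linear (C' p)" using dCp has_derivative_linear by blast
  have dB11: "(\<lambda>h. B' p h $1$1) = (\<lambda>h. 0)"
    by (rule local_deriv_eq[OF entry_deriv[OF dBp] has_derivative_const oD pD]) (use Bv in auto)
  have dB12: "(\<lambda>h. B' p h $1$2) = (\<lambda>h. 0)"
    by (rule local_deriv_eq[OF entry_deriv[OF dBp] has_derivative_const oD pD]) (use Bv in auto)
  have dA11: "(\<lambda>h. A' p h $1$1) = (\<lambda>h. h$1 + B' p h$2$1)"
    by (rule local_deriv_eq[OF entry_deriv[OF dAp] has_derivative_add[OF nth_deriv entry_deriv[OF dBp]] oD pD])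
      (use Av in auto)
  have dA12: "(\<lambda>h. A' p h $1$2) = (\<lambda>h. B' p h$2$2)"
    by (rule local_deriv_eq[OF entry_deriv[OF dAp] entry_deriv[OF dBp] oD pD]) (use Av in auto)
  have dA21: "(\<lambda>h. A' p h $2$1) = (\<lambda>h. B p$2$1 * B' p h$2$2 + B' p h$2$1 * B p$2$2)"
    by (rule local_deriv_eq[OF entry_deriv[OF dAp] has_derivative_mult[OF entry_deriv[OF dBp] entry_deriv[OF dBp]] oD pD])
      (use Ae in auto)
  have dA22: "(\<lambda>h. A' p h $2$2) = (\<lambda>h. (h$1 + B' p h$2$1) + (B p$2$2 * B' p h$2$2 + B' p h$2$2 * B p$2$2))"
    by (rule local_deriv_eq[OF entry_deriv[OF dAp] has_derivative_add[OF has_derivative_add[OF nth_deriv entry_deriv[OF dBp]]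
        has_derivative_mult[OF entry_deriv[OF dBp] entry_deriv[OF dBp]]] oD pD])
      (use Ae in auto)
  have dC21: "(\<lambda>h. C' p h $2$1) = (\<lambda>h. B p$2$1 * C' p h$1$2 + B' p h$2$1 * C p$1$2)"
    by (rule local_deriv_eq[OF entry_deriv[OF dCp] has_derivative_mult[OF entry_deriv[OF dBp] entry_deriv[OF dCp]] oD pD])
      (use Ce in auto)
  have dC22: "(\<lambda>h. C' p h $2$2) = (\<lambda>h. C' p h$1$1 + (B p$2$2 * C' p h$1$2 + B' p h$2$2 * C p$1$2))"
    by (rule local_deriv_eq[OF entry_deriv[OF dCp] has_derivative_add[OF entry_deriv[OF dCp]
        has_derivative_mult[OF entry_deriv[OF dBp] entry_deriv[OF dCp]]] oD pD])
      (use Ce in auto)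
  have fdA: "frechet_derivative A (at p) = A' p" using frechet_derivative_at[OF dAp] by simp
  have fdB: "frechet_derivative B (at p) = B' p" using frechet_derivative_at[OF dBp] by simp
  have fdC: "frechet_derivative C (at p) = C' p" using frechet_derivative_at[OF dCp] by simp
  have H1: "A' p (B p *v e2) *v e2 + A p *v (B' p e2 *v e2) = B' p (A p *v e2) *v e2 + B p *v (A' p e2 *v e2)"
    using hAB[unfolded hydro_commute_def, rule_format, OF pD, of e2 0] by (simp add: fdA fdB)
  have H2: "B' p (C p *v e2) *v e2 + B p *v (C' p e2 *v e2) = C' p (B p *v e2) *v e2 + C p *v (B' p e2 *v e2)"
    using hBC[unfolded hydro_commute_def, rule_format, OF pD, of e2 0] by (simp add: fdC fdB)
  have r1: "B' p e2 $2$1 = B' p e1 $2$2 \<and> B' p e1$2$1 + B p$2$2 * B' p e2$2$1 - B p$2$1 * B' p e2$2$2 + 1 = 0"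
    apply (rule alg_AB[OF lB _ _ _ _ _ _ _ _ _ _ _ _ _ _ H1, where u="p$1"])
    using Bv[OF pD] Av[OF pD] Ae[OF pD] dB11 dB12 dA11 dA12 dA21 dA22
    by (auto simp: fun_eq_iff algebra_simps)
  have r2: "C' p e2$1$1 = C' p e1$1$2 \<and> C' p e1$1$1 + B p$2$2 * C' p e2$1$1 - B p$2$1 * C' p e2$1$2 = 0"
    apply (rule alg_BC[OF lB lC _ _ _ _ _ _ _ _ _ _ H2])
    using Bv[OF pD] Ce[OF pD] dB11 dB12 dC21 dC22
    by (auto simp: fun_eq_iff algebra_simps)
  show ?thesis using r1 r2 by blast
qed

theorem proposition1:
  fixes U :: "real \<times> real \<times> real \<Rightarrow> real^2"
    and \<Omega> :: "(real \<times> real \<times> real) set" and D :: "(real^2) set"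
    and A B C :: "real^2 \<Rightarrow> real^2^2"
  assumes "two_phase_solution U \<Omega> D A B C"
  shows "\<forall>q\<in>D. \<exists>r>0. ball q r \<subseteq> D \<and>
           (\<exists>z zu zw zuu zuw zww m mu mw muu muw mww :: real^2 \<Rightarrow> real.
              has_partials z zu zw (ball q r) \<and>
              has_partials zu zuu zuw (ball q r) \<and>
              has_partials zw zuw zww (ball q r) \<and>
              has_partials m mu mw (ball q r) \<and>
              has_partials mu muu muw (ball q r) \<and>
              has_partials mw muw mww (ball q r) \<and>
              (\<forall>p\<in>ball q r. zuu p + zw p * zuw p - zu p * zww p + 1 = 0) \<and>
              (\<forall>p\<in>ball q r. muu p + zw p * muw p - zu p * mww p = 0) \<and>
              (\<forall>x y t. (x,y,t) \<in> \<Omega> \<longrightarrow> U (x,y,t) \<in> ball q r \<longrightarrow>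
                 x + (zu (U (x,y,t)) + U (x,y,t) $ 1) * t = mu (U (x,y,t)) \<and>
                 y + zw (U (x,y,t)) * t = mw (U (x,y,t))))"
proof
  fix q assume qD: "q \<in> D"
  note tp = assms[unfolded two_phase_solution_def]
  have oD: "open D" and UD: "U ` \<Omega> \<subseteq> D" and dkp: "dKP_compatible A B D"
    and hAB: "hydro_commute A B D" and hBC: "hydro_commute B C D"
    and hod: "\<forall>x y t. (x,y,t) \<in> \<Omega> \<longrightarrow>
        x *\<^sub>R mat 1 + t *\<^sub>R A (U (x,y,t)) + y *\<^sub>R B (U (x,y,t)) = C (U (x,y,t))"
    using tp by auto
  obtain A' where dA: "\<forall>p\<in>D. (A has_derivative A' p) (at p)"
    using tp unfolding C1_on_def by blast
  obtain B' where dB: "\<forall>p\<in>D. (B has_derivative B' p) (at p)" and cB: "\<forall>v. continuous_on D (\<lambda>p. B' p v)"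
    using tp unfolding C1_on_def by blast
  obtain C' where dC: "\<forall>p\<in>D. (C has_derivative C' p) (at p)" and cC: "\<forall>v. continuous_on D (\<lambda>p. C' p v)"
    using tp unfolding C1_on_def by blast
  note pw = pointwise[OF oD _ dA dB dC dkp hAB hBC]
  obtain r where r: "r > 0" "ball q r \<subseteq> D" using oD qD open_contains_ball by blast
  let ?S = "ball q r"
  have lB: "linear (B' p)" if "p \<in> D" for p using dB that has_derivative_linear by blast
  have lC: "linear (C' p)" if "p \<in> D" for p using dC that has_derivative_linear by blast
  have lBe: "B' p h $i$j = h$1 * B' p e1 $i$j + h$2 * B' p e2 $i$j" if "p \<in> D" for p h i j
    using lin2[OF lB[OF that], of h] by simp
  have lCe: "C' p h $i$j = h$1 * C' p e1 $i$j + h$2 * C' p e2 $i$j" if "p \<in> D" for p h i j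
    using lin2[OF lC[OF that], of h] by simp
  obtain z where z: "\<forall>p\<in>?S. (z has_derivative (\<lambda>h. B p $ 2 \<bullet> h)) (at p)"
  proof -
    have "\<exists>z. \<forall>p\<in>?S. (z has_derivative (\<lambda>h. B p $ 2 \<bullet> h)) (at p)"
    proof (rule poincare[where q=q and DF="\<lambda>p h. B' p h $ 2"])
      show "\<forall>p\<in>?S. ((\<lambda>p. B p $ 2) has_derivative (\<lambda>h. B' p h $ 2)) (at p)"
        using dB r(2) row_deriv by blast
      show "\<forall>v. continuous_on ?S (\<lambda>p. B' p v $ 2)"
        using cB r(2) by (auto intro!: linear_continuous_on_compose[where g="\<lambda>x. x $ 2"] bounded_linear.linear[OF bounded_linear_vec_nth] intro: continuous_on_subset)
      show "\<forall>p\<in>?S. \<forall>h k. B' p h $ 2 \<bullet> k = B' p k $ 2 \<bullet> h"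
      proof (intro ballI allI)
        fix p h k assume "p \<in> ?S"
        hence pD: "p \<in> D" using r by auto
        show "B' p h $ 2 \<bullet> k = B' p k $ 2 \<bullet> h"
          using pw[OF pD] unfolding inner_vec_def sum_2
          by (simp add: lBe[OF pD, of h] lBe[OF pD, of k] algebra_simps)
      qed
    qed (auto simp: r)
    thus ?thesis using that by blast
  qed
  obtain m where m: "\<forall>p\<in>?S. (m has_derivative (\<lambda>h. C p $ 1 \<bullet> h)) (at p)"
  proof -
    have "\<exists>z. \<forall>p\<in>?S. (z has_derivative (\<lambda>h. C p $ 1 \<bullet> h)) (at p)"
    proof (rule poincare[where q=q and DF="\<lambda>p h. C' p h $ 1"])
      show "\<forall>p\<in>?S. ((\<lambda>p. C p $ 1) has_derivative (\<lambda>h. C' p h $ 1)) (at p)"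
        using dC r(2) row_deriv by blast
      show "\<forall>v. continuous_on ?S (\<lambda>p. C' p v $ 1)"
        using cC r(2) by (auto intro!: linear_continuous_on_compose[where g="\<lambda>x. x $ 1"] bounded_linear.linear[OF bounded_linear_vec_nth] intro: continuous_on_subset)
      show "\<forall>p\<in>?S. \<forall>h k. C' p h $ 1 \<bullet> k = C' p k $ 1 \<bullet> h"
      proof (intro ballI allI)
        fix p h k assume "p \<in> ?S"
        hence pD: "p \<in> D" using r by auto
        show "C' p h $ 1 \<bullet> k = C' p k $ 1 \<bullet> h"
          using pw[OF pD] unfolding inner_vec_def sum_2
          by (simp add: lCe[OF pD, of h] lCe[OF pD, of k] algebra_simps)
      qed
    qed (auto simp: r)
    thus ?thesis using that by blast
  qed
  show "\<exists>r>0. ball q r \<subseteq> D \<and>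
           (\<exists>z zu zw zuu zuw zww m mu mw muu muw mww :: real^2 \<Rightarrow> real.
              has_partials z zu zw (ball q r) \<and>
              has_partials zu zuu zuw (ball q r) \<and>
              has_partials zw zuw zww (ball q r) \<and>
              has_partials m mu mw (ball q r) \<and>
              has_partials mu muu muw (ball q r) \<and>
              has_partials mw muw mww (ball q r) \<and>
              (\<forall>p\<in>ball q r. zuu p + zw p * zuw p - zu p * zww p + 1 = 0) \<and>
              (\<forall>p\<in>ball q r. muu p + zw p * muw p - zu p * mww p = 0) \<and>
              (\<forall>x y t. (x,y,t) \<in> \<Omega> \<longrightarrow> U (x,y,t) \<in> ball q r \<longrightarrow>
                 x + (zu (U (x,y,t)) + U (x,y,t) $ 1) * t = mu (U (x,y,t)) \<and>
                 y + zw (U (x,y,t)) * t = mw (U (x,y,t))))"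
  proof (intro exI conjI)
    show "r > 0" "ball q r \<subseteq> D" using r by auto
    show "has_partials z (\<lambda>p. B p$2$1) (\<lambda>p. B p$2$2) ?S"
      unfolding has_partials_def
    proof
      fix p assume "p \<in> ?S"
      thus "(z has_derivative (\<lambda>h. B p$2$1 * h$1 + B p$2$2 * h$2)) (at p)"
        using z by (simp add: inner_vec_def sum_2)
    qed
    show "has_partials (\<lambda>p. B p$2$1) (\<lambda>p. B' p e1$2$1) (\<lambda>p. B' p e2$2$1) ?S"
      unfolding has_partials_def
    proof
      fix p assume "p \<in> ?S"
      hence pD: "p \<in> D" using r by auto
      show "((\<lambda>p. B p$2$1) has_derivative (\<lambda>h. B' p e1$2$1 * h$1 + B' p e2$2$1 * h$2)) (at p)"
        using entry_deriv[OF dB[rule_format, OF pD], of 2 1]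
        by (rule has_derivative_eq_rhs) (simp add: lin2_entry[OF lB[OF pD]])
    qed
    show "has_partials (\<lambda>p. B p$2$2) (\<lambda>p. B' p e2$2$1) (\<lambda>p. B' p e2$2$2) ?S"
      unfolding has_partials_def
    proof
      fix p assume "p \<in> ?S"
      hence pD: "p \<in> D" using r by auto
      show "((\<lambda>p. B p$2$2) has_derivative (\<lambda>h. B' p e2$2$1 * h$1 + B' p e2$2$2 * h$2)) (at p)"
        using entry_deriv[OF dB[rule_format, OF pD], of 2 2]
        by (rule has_derivative_eq_rhs) (use pw[OF pD] in \<open>simp add: lin2_entry[OF lB[OF pD]]\<close>)
    qed
    show "has_partials m (\<lambda>p. C p$1$1) (\<lambda>p. C p$1$2) ?S"
      unfolding has_partials_def
    proof
      fix p assume "p \<in> ?S"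
      thus "(m has_derivative (\<lambda>h. C p$1$1 * h$1 + C p$1$2 * h$2)) (at p)"
        using m by (simp add: inner_vec_def sum_2)
    qed
    show "has_partials (\<lambda>p. C p$1$1) (\<lambda>p. C' p e1$1$1) (\<lambda>p. C' p e2$1$1) ?S"
      unfolding has_partials_def
    proof
      fix p assume "p \<in> ?S"
      hence pD: "p \<in> D" using r by auto
      show "((\<lambda>p. C p$1$1) has_derivative (\<lambda>h. C' p e1$1$1 * h$1 + C' p e2$1$1 * h$2)) (at p)"
        using entry_deriv[OF dC[rule_format, OF pD], of 1 1]
        by (rule has_derivative_eq_rhs) (simp add: lin2_entry[OF lC[OF pD]])
    qed
    show "has_partials (\<lambda>p. C p$1$2) (\<lambda>p. C' p e2$1$1) (\<lambda>p. C' p e2$1$2) ?S"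
      unfolding has_partials_def
    proof
      fix p assume "p \<in> ?S"
      hence pD: "p \<in> D" using r by auto
      show "((\<lambda>p. C p$1$2) has_derivative (\<lambda>h. C' p e2$1$1 * h$1 + C' p e2$1$2 * h$2)) (at p)"
        using entry_deriv[OF dC[rule_format, OF pD], of 1 2]
        by (rule has_derivative_eq_rhs) (use pw[OF pD] in \<open>simp add: lin2_entry[OF lC[OF pD]]\<close>)
    qed
    show "\<forall>p\<in>?S. B' p e1$2$1 + B p$2$2 * B' p e2$2$1 - B p$2$1 * B' p e2$2$2 + 1 = 0"
      using pw r(2) by blast
    show "\<forall>p\<in>?S. C' p e1$1$1 + B p$2$2 * C' p e2$1$1 - B p$2$1 * C' p e2$1$2 = 0"
      using pw r(2) by blast
    show "\<forall>x y t. (x,y,t) \<in> \<Omega> \<longrightarrow> U (x,y,t) \<in> ?S \<longrightarrow>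
                 x + (B (U (x,y,t))$2$1 + U (x,y,t) $ 1) * t = C (U (x,y,t))$1$1 \<and>
                 y + B (U (x,y,t))$2$2 * t = C (U (x,y,t))$1$2"
    proof (intro allI impI)
      fix x y t assume xo: "(x,y,t) \<in> \<Omega>" and "U (x,y,t) \<in> ?S"
      let ?u = "U (x,y,t)"
      have uD: "?u \<in> D" using UD xo by auto
      have E: "x *\<^sub>R mat 1 + t *\<^sub>R A ?u + y *\<^sub>R B ?u = C ?u" using hod xo by blast
      have E1: "(x *\<^sub>R mat 1 + t *\<^sub>R A ?u + y *\<^sub>R B ?u)$1$1 = C ?u$1$1"
        and E2: "(x *\<^sub>R mat 1 + t *\<^sub>R A ?u + y *\<^sub>R B ?u)$1$2 = C ?u$1$2" using E by auto
      have Bv: "B ?u $1$1 = 0 \<and> B ?u$1$2 = 1"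
        using dkp[unfolded dKP_compatible_def, rule_format, OF uD, of e1]
          dkp[unfolded dKP_compatible_def, rule_format, OF uD, of e2] by (simp add: mv2)
      have Av: "A ?u$1$1 = ?u$1 + B ?u$2$1 \<and> A ?u$1$2 = B ?u$2$2"
        using dkp[unfolded dKP_compatible_def, rule_format, OF uD, of e1]
          dkp[unfolded dKP_compatible_def, rule_format, OF uD, of e2] by (simp add: mv2)
      show "x + (B ?u$2$1 + ?u $ 1) * t = C ?u$1$1 \<and> y + B ?u$2$2 * t = C ?u$1$2"
        using E1 E2 Av Bv by (simp add: mat_def algebra_simps)
    qed
  qed
qed
end
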